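(* Let $S \in \{0,1\}^{\omega}$. 1. If $\rho_{\mathrm{PD}}(S) = 1$, then $S$ is not PD-deep. 2. If $R_{\mathrm{UPD}}(S) = 0$, then $S$ is not PD-deep.
   Context: For $S\in\{0,1\}^\omega$, $S\upharpoonright n$ denotes the prefix of length $n$ of $S$. A pushdown compressor (PDC) is a tuple $C=(Q,\Gamma,\delta,\nu,q_0,z_0,c)$ where $Q$ is a finite nonempty set of states, $\Gamma=\{0,1,z_0\}$ is the stack alphabet with $z_0$ the bottom-of-stack symbol, $\delta: Q\times(\{0,1\}\cup\{\lambda\})\times\Gamma\to Q\times\Gamma^*$ is a partial transition function, $\nu: Q\times(\{0,1\}\cup\{\lambda\})\times\Gamma\to\{0,1\}^*$ is the output function, $q_0$ is the start state, and $c\in\mathbb{N}$ bounds the number of consecutive $\lambda$-transitions (transitions that read no input bit; $\lambda$-transitions pop the top stack symbol and output nothing). On each transition the top stack symbol is replaced by the string given by $\delta$; $z_0$ is never removed from the bottom. Determinism: for each state $q$ and top symbol $a$, either $\delta(q,\lambda,a)$ is undefined or $\delta(q,b,a)$ is undefined for both $b\in\{0,1\}$. After each input bit, all available $\lambda$-transitions are performed. $C(w)$ denotes the concatenated output on input $w$ from $q_0$ with stack $z_0$, and $\delta_Q(w)$ the resulting state. $C$ is information lossless (an ILPDC) if $w\mapsto (C(w),\delta_Q(w))$ is injective. A unary-stack PDC (UPDC) is defined identically but with stack alphabet $\Gamma=\{0,z_0\}$; an information lossless one is an ILUPDC. $\rho_{\mathrm{PD}}(S)=\inf_{C\in\mathrm{ILPDC}}\liminf_{n\to\infty}|C(S\upharpoonright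 n)|/n$ and $R_{\mathrm{UPD}}(S)=\inf_{C\in\mathrm{ILUPDC}}\limsup_{n\to\infty}|C(S\upharpoonright n)|/n$. $S$ is PD-deep if there is $\alpha>0$ such that for every ILUPDC $C$ there is an ILPDC $C'$ with $|C(S\upharpoonright n)|-|C'(S\upharpoonright n)|\ge \alpha n$ for all but finitely many $n$. *)

theory Defs
  imports Complex_Main "HOL-Library.Extended_Real" "HOL-Library.Liminf_Limsup"
begin

text \<open>Stack alphabet: S0 = 0, S1 = 1, Z0 = bottom-of-stack symbol z0.
  Input symbols: Some b = bit b (False = 0, True = 1), None = lambda (no input).\<close>
datatype gsym = S0 | S1 | Z0

record pdc =
  pd_states :: "nat set"
  pd_delta  :: "nat \<Rightarrow> bool option \<Rightarrow> gsym \<Rightarrow> (nat \<times> gsym list) option"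
  pd_nu     :: "nat \<Rightarrow> bool option \<Rightarrow> gsym \<Rightarrow> bool list"
  pd_start  :: nat
  pd_bound  :: nat

text \<open>Performing all available lambda-transitions, with at most n consecutive ones allowed
  (None = the bound is violated).  The stack is a list with its top first.\<close>
fun lam_close :: "pdc \<Rightarrow> nat \<Rightarrow> nat \<times> gsym list \<Rightarrow> (nat \<times> gsym list) option" where
  "lam_close C n (q, []) = Some (q, [])"
| "lam_close C 0 (q, a # s) =
     (if pd_delta C q None a = None then Some (q, a # s) else None)"
| "lam_close C (Suc n) (q, a # s) =
     (case pd_delta C q None a of
        None \<Rightarrow> Some (q, a # s)
      | Some (q', g) \<Rightarrow> lam_close C n (q', g @ s))"

fun pd_step :: "pdc \<Rightarrow> bool \<Rightarrow> nat \<times> gsym list \<Rightarrow> ((nat \<times> gsym list) \<times> bool list) option" where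
  "pd_step C b (q, []) = None"
| "pd_step C b (q, a # s) =
     (case pd_delta C q (Some b) a of
        None \<Rightarrow> None
      | Some (q', g) \<Rightarrow>
          map_option (\<lambda>cf. (cf, pd_nu C q (Some b) a)) (lam_close C (pd_bound C) (q', g @ s)))"

fun pd_run_from :: "pdc \<Rightarrow> nat \<times> gsym list \<Rightarrow> bool list \<Rightarrow> ((nat \<times> gsym list) \<times> bool list) option" where
  "pd_run_from C cf [] = Some (cf, [])"
| "pd_run_from C cf (b # w) =
     (case pd_step C b cf of
        None \<Rightarrow> None
      | Some (cf', out) \<Rightarrow> map_option (\<lambda>(cf'', out'). (cf'', out @ out')) (pd_run_from C cf' w))"

definition pd_run :: "pdc \<Rightarrow> bool list \<Rightarrow> ((nat \<times> gsym list) \<times> bool list) option" where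
  "pd_run C w = pd_run_from C (pd_start C, [Z0]) w"

definition pd_out :: "pdc \<Rightarrow> bool list \<Rightarrow> bool list" where
  "pd_out C w = (case pd_run C w of Some (_, out) \<Rightarrow> out | None \<Rightarrow> [])"

definition pd_state :: "pdc \<Rightarrow> bool list \<Rightarrow> nat" where
  "pd_state C w = (case pd_run C w of Some ((q, _), _) \<Rightarrow> q | None \<Rightarrow> pd_start C)"

definition stack_alph :: "bool \<Rightarrow> gsym set" where
  "stack_alph unary = (if unary then {S0, Z0} else {S0, S1, Z0})"

definition nonbot_alph :: "bool \<Rightarrow> gsym set" where
  "nonbot_alph unary = (if unary then {S0} else {S0, S1})"

text \<open>Well-formed (deterministic, lambda-bounded) pushdown compressor; unary = True gives a UPDC.\<close>
definition pdc_valid :: "bool \<Rightarrow> pdc \<Rightarrow> bool" where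
  "pdc_valid unary C \<longleftrightarrow>
     finite (pd_states C) \<and> pd_states C \<noteq> {} \<and> pd_start C \<in> pd_states C \<and>
     (\<forall>q \<in> pd_states C. \<forall>x. \<forall>a \<in> stack_alph unary. \<forall>q' g.
        pd_delta C q x a = Some (q', g) \<longrightarrow>
          q' \<in> pd_states C \<and>
          (a \<noteq> Z0 \<longrightarrow> set g \<subseteq> nonbot_alph unary) \<and>
          (a = Z0 \<longrightarrow> (\<exists>g'. g = g' @ [Z0] \<and> set g' \<subseteq> nonbot_alph unary)) \<and>
          (x = None \<longrightarrow> g = (if a = Z0 then [Z0] else []))) \<and>
     (\<forall>q \<in> pd_states C. \<forall>a \<in> stack_alph unary. pd_nu C q None a = []) \<and>
     (\<forall>q \<in> pd_states C. \<forall>a \<in> stack_alph unary.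
        pd_delta C q None a = None \<or> (\<forall>b. pd_delta C q (Some b) a = None)) \<and>
     (\<forall>w. pd_run C w \<noteq> None)"

definition info_lossless :: "pdc \<Rightarrow> bool" where
  "info_lossless C \<longleftrightarrow> inj (\<lambda>w. (pd_out C w, pd_state C w))"

definition ILPDC :: "pdc \<Rightarrow> bool" where
  "ILPDC C \<longleftrightarrow> pdc_valid False C \<and> info_lossless C"

definition ILUPDC :: "pdc \<Rightarrow> bool" where
  "ILUPDC C \<longleftrightarrow> pdc_valid True C \<and> info_lossless C"

definition pref :: "(nat \<Rightarrow> bool) \<Rightarrow> nat \<Rightarrow> bool list" where
  "pref S n = map S [0..<n]"

definition ratio :: "pdc \<Rightarrow> (nat \<Rightarrow> bool) \<Rightarrow> nat \<Rightarrow> ereal" where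
  "ratio C S n = ereal (real (length (pd_out C (pref S n))) / real n)"

definition rho_PD :: "(nat \<Rightarrow> bool) \<Rightarrow> ereal" where
  "rho_PD S = (INF C \<in> {C. ILPDC C}. liminf (ratio C S))"

definition R_UPD :: "(nat \<Rightarrow> bool) \<Rightarrow> ereal" where
  "R_UPD S = (INF C \<in> {C. ILUPDC C}. limsup (ratio C S))"

definition PD_deep :: "(nat \<Rightarrow> bool) \<Rightarrow> bool" where
  "PD_deep S \<longleftrightarrow> (\<exists>\<alpha>::real > 0. \<forall>C. ILUPDC C \<longrightarrow> (\<exists>C'. ILPDC C' \<and>
      (\<forall>\<^sub>F n in sequentially.
         real (length (pd_out C (pref S n))) - real (length (pd_out C' (pref S n))) \<ge> \<alpha> * real n)))"

end

theory Submission
  imports Defs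
begin

definition idc :: pdc where
  "idc = \<lparr>pd_states = {0},
          pd_delta = (\<lambda>q x a. case x of None \<Rightarrow> None | Some b \<Rightarrow> Some (0, [a])),
          pd_nu = (\<lambda>q x a. case x of None \<Rightarrow> [] | Some b \<Rightarrow> [b]),
          pd_start = 0, pd_bound = 0\<rparr>"

lemma idc_run_from: "pd_run_from idc (0, [Z0]) w = Some ((0, [Z0]), w)"
  by (induction w) (auto simp: idc_def)

lemma idc_run: "pd_run idc w = Some ((0, [Z0]), w)"
  using idc_run_from by (simp add: pd_run_def idc_def)

lemma idc_out: "pd_out idc w = w"
  by (simp add: pd_out_def idc_run)

lemma idc_IL: "ILUPDC idc"
  unfolding ILUPDC_def pdc_valid_def info_lossless_def
  by (auto simp: idc_run idc_out stack_alph_def nonbot_alph_def inj_def split: option.splits)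
     (auto simp: idc_def split: option.splits)

theorem mainTheorem1:
  fixes S :: "nat \<Rightarrow> bool"
  shows "(rho_PD S = 1 \<longrightarrow> \<not> PD_deep S) \<and> (R_UPD S = 0 \<longrightarrow> \<not> PD_deep S)"
proof (intro conjI impI notI)
  assume r: "rho_PD S = 1" and d: "PD_deep S"
  then obtain \<alpha> :: real where a: "\<alpha> > 0" and h: "\<forall>C. ILUPDC C \<longrightarrow> (\<exists>C'. ILPDC C' \<and>
      (\<forall>\<^sub>F n in sequentially.
         real (length (pd_out C (pref S n))) - real (length (pd_out C' (pref S n))) \<ge> \<alpha> * real n))"
    unfolding PD_deep_def by blast
  obtain C' where c': "ILPDC C'" and ev: "\<forall>\<^sub>F n in sequentially.
         real (length (pd_out idc (pref S n))) - real (length (pd_out C' (pref S n))) \<ge> \<alpha> * real n"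
    using h idc_IL by blast
  have "1 \<le> liminf (ratio C' S)"
    using r c' unfolding rho_PD_def by (metis INF_lower mem_Collect_eq)
  hence "\<forall>\<^sub>F n in sequentially. ereal (1 - \<alpha>) < ratio C' S n"
    using a by (simp add: le_Liminf_iff)
  moreover have "\<forall>\<^sub>F n in sequentially. n > (0::nat)"
    by (simp add: eventually_gt_at_top)
  ultimately have "\<forall>\<^sub>F n in sequentially. False"
    using ev
  proof eventually_elim
    case (elim n)
    have "1 - \<alpha> < real (length (pd_out C' (pref S n))) / real n"
      using elim(1) by (simp add: ratio_def)
    hence "(1 - \<alpha>) * real n < real (length (pd_out C' (pref S n)))"
      using elim(2) by (simp add: field_simps)
    moreover have "length (pd_out idc (pref S n)) = n"
      by (simp add: idc_out pref_def)
    ultimately show False using elim(3) by (simp add: algebra_simps)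
  qed
  thus False by simp
next
  assume r: "R_UPD S = 0" and d: "PD_deep S"
  then obtain \<alpha> :: real where a: "\<alpha> > 0" and h: "\<forall>C. ILUPDC C \<longrightarrow> (\<exists>C'. ILPDC C' \<and>
      (\<forall>\<^sub>F n in sequentially.
         real (length (pd_out C (pref S n))) - real (length (pd_out C' (pref S n))) \<ge> \<alpha> * real n))"
    unfolding PD_deep_def by blast
  have "(INF C \<in> {C. ILUPDC C}. limsup (ratio C S)) < ereal \<alpha>"
    using r a unfolding R_UPD_def by simp
  then obtain C where c: "ILUPDC C" and l: "limsup (ratio C S) < ereal \<alpha>"
    by (auto simp: INF_less_iff)
  obtain C' where ev: "\<forall>\<^sub>F n in sequentially.
         real (length (pd_out C (pref S n))) - real (length (pd_out C' (pref S n))) \<ge> \<alpha> * real n"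
    using h c by blast
  have "\<forall>\<^sub>F n in sequentially. ratio C S n < ereal \<alpha>"
    using l by (simp add: Limsup_lessD)
  moreover have "\<forall>\<^sub>F n in sequentially. n > (0::nat)"
    by (simp add: eventually_gt_at_top)
  ultimately have "\<forall>\<^sub>F n in sequentially. False"
    using ev
  proof eventually_elim
    case (elim n)
    have "real (length (pd_out C (pref S n))) / real n < \<alpha>"
      using elim(1) by (simp add: ratio_def)
    hence "real (length (pd_out C (pref S n))) < \<alpha> * real n"
      using elim(2) by (simp add: field_simps)
    thus False using elim(3) by simp
  qed
  thus False by simp
qed

end
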